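(* Let $X,Y$ be random vectors in $\mathbb{R}^m,\mathbb{R}^n$, $\mu,\nu$ finite symmetric Lévy measures on $\mathbb{R}^m\setminus\{0\}$, $\mathbb{R}^n\setminus\{0\}$ with full support, $\Phi(x)=\int(1-\cos\langle x,s\rangle)\mu(ds)$, $\Psi(y)=\int(1-\cos\langle y,t\rangle)\nu(dt)$, and let $(X_1,Y_1),(X_4,Y_4)$ be i.i.d. copies of $(X,Y)$. Define \begin{align*} \overline{\overline{\Phi}}&=\Phi(X_1-X_4)-\mathbb{E}(\Phi(X_4-X_1)\mid X_4)-\mathbb{E}(\Phi(X_4-X_1)\mid X_1)+\mathbb{E}\Phi(X_1-X_4),\\ \overline{\overline{\Psi}}&=\Psi(Y_1-Y_4)-\mathbb{E}(\Psi(Y_4-Y_1)\mid Y_4)-\mathbb{E}(\Psi(Y_4-Y_1)\mid Y_1)+\mathbb{E}\Psi(Y_1-Y_4). \end{align*} Then $V^2(X,Y)=\mathbb{E}\big[\overline{\overline{\Phi}}\cdot\overline{\overline{\Psi}}\big]$.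
   Context: Symmetric Lévy measure on $\mathbb{R}^d\setminus\{0\}$: $\rho(B)=\rho(-B)$ and $\int(1\wedge|r|^2)\rho(dr)<\infty$; full support: positive mass on every nonempty open subset. $V^2(X,Y)=\iint|f_{(X,Y)}(s,t)-f_X(s)f_Y(t)|^2\,\mu(ds)\,\nu(dt)$, $f$ denoting characteristic functions. *)

theory Defs
  imports "HOL-Probability.Probability"
begin

text \<open>A symmetric Levy measure on the punctured space (a Borel measure giving no
mass to the origin), with the Levy integrability condition.\<close>
definition symmetric_levy_measure :: "'a::euclidean_space measure \<Rightarrow> bool" where
  "symmetric_levy_measure \<rho> \<longleftrightarrow>
     sets \<rho> = sets borel \<and> emeasure \<rho> {0} = 0 \<and>
     (\<forall>B\<in>sets \<rho>. emeasure \<rho> (uminus ` B) = emeasure \<rho> B) \<and>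
     (\<integral>\<^sup>+ r. ennreal (min 1 (norm r ^ 2)) \<partial>\<rho>) < \<infinity>"

definition full_support :: "'a::euclidean_space measure \<Rightarrow> bool" where
  "full_support \<rho> \<longleftrightarrow> (\<forall>U. open U \<and> U \<noteq> {} \<and> 0 \<notin> U \<longrightarrow> emeasure \<rho> U > 0)"

definition charfun :: "'s measure \<Rightarrow> ('s \<Rightarrow> 'a::euclidean_space) \<Rightarrow> 'a \<Rightarrow> complex" where
  "charfun M X s = (LINT \<omega>|M. cis (s \<bullet> X \<omega>))"

definition joint_charfun :: "'s measure \<Rightarrow> ('s \<Rightarrow> 'a::euclidean_space) \<Rightarrow> ('s \<Rightarrow> 'b::euclidean_space)
    \<Rightarrow> 'a \<Rightarrow> 'b \<Rightarrow> complex" where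
  "joint_charfun M X Y s t = (LINT \<omega>|M. cis (s \<bullet> X \<omega> + t \<bullet> Y \<omega>))"

definition dcov2 :: "'a::euclidean_space measure \<Rightarrow> 'b::euclidean_space measure \<Rightarrow> 's measure
    \<Rightarrow> ('s \<Rightarrow> 'a) \<Rightarrow> ('s \<Rightarrow> 'b) \<Rightarrow> real" where
  "dcov2 \<mu> \<nu> M X Y =
     (LINT s|\<mu>. LINT t|\<nu>. (cmod (joint_charfun M X Y s t - charfun M X s * charfun M Y t))^2)"

definition levy_psi :: "'a::euclidean_space measure \<Rightarrow> 'a \<Rightarrow> real" where
  "levy_psi \<mu> x = (LINT s|\<mu>. 1 - cos (x \<bullet> s))"

definition double_centered :: "'s measure \<Rightarrow> ('a::euclidean_space \<Rightarrow> real)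
    \<Rightarrow> ('s \<Rightarrow> 'a) \<Rightarrow> ('s \<Rightarrow> 'a) \<Rightarrow> 's \<Rightarrow> real" where
  "double_centered N \<Phi> Z1 Z4 \<omega> =
     \<Phi> (Z1 \<omega> - Z4 \<omega>)
     - real_cond_exp N (vimage_algebra (space N) Z4 borel) (\<lambda>\<omega>'. \<Phi> (Z4 \<omega>' - Z1 \<omega>')) \<omega>
     - real_cond_exp N (vimage_algebra (space N) Z1 borel) (\<lambda>\<omega>'. \<Phi> (Z4 \<omega>' - Z1 \<omega>')) \<omega>
     + (LINT \<omega>'|N. \<Phi> (Z1 \<omega>' - Z4 \<omega>'))"

end

theory Submission
  imports Defs
begin


lemma cond_exp_general:
  fixes Z :: "'s \<Rightarrow> 'a::euclidean_space" and W :: "'s \<Rightarrow> 'a" and g :: "'a \<Rightarrow> 'a \<Rightarrow> real"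
  assumes N: "prob_space N" and [measurable]: "Z \<in> borel_measurable N" "W \<in> borel_measurable N"
    and Q: "prob_space Q" and sQ: "sets Q = sets borel"
    and dZ: "distr N borel Z = Q"
    and joint: "distr N (borel \<Otimes>\<^sub>M borel) (\<lambda>\<omega>. (Z \<omega>, W \<omega>)) = Q \<Otimes>\<^sub>M Q"
    and [measurable]: "case_prod g \<in> borel_measurable (borel \<Otimes>\<^sub>M borel)"
    and bnd: "\<And>x y. \<bar>g x y\<bar> \<le> B"
  shows "AE \<omega> in N. real_cond_exp N (vimage_algebra (space N) Z borel) (\<lambda>\<omega>. g (Z \<omega>) (W \<omega>)) \<omega>
           = (\<integral>w. g (Z \<omega>) w \<partial>Q)"
proof -
  interpret N: prob_space N by (rule N)
  interpret Q: prob_space Q by (rule Q)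
  interpret QQ: pair_sigma_finite Q Q by unfold_locales
  interpret QQf: finite_measure "Q \<Otimes>\<^sub>M Q" by (intro finite_measure_pair_measure) unfold_locales
  have idQ[measurable]: "(\<lambda>x. x) \<in> measurable Q borel" by (rule measurable_ident_sets[OF sQ])
  let ?F = "vimage_algebra (space N) Z borel"
  have subalg: "subalgebra N ?F" unfolding subalgebra_def
    using sets_image_in_sets[of N "space N" Z borel] by auto
  interpret F: sigma_finite_subalgebra N ?F
    by (rule finite_measure_subalgebra_is_sigma_finite) (simp add: finite_measure_subalgebra_def finite_measure_subalgebra_axioms_def subalg N.finite_measure_axioms)
  have B0: "0 \<le> B" using bnd[of undefined undefined] by linarith
  define A where "A z = (\<integral>w. g z w \<partial>Q)" for z
  have gm[measurable]: "(\<lambda>(x, y). g x y) \<in> borel_measurable (borel \<Otimes>\<^sub>M Q)"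
    using measurable_cong_sets[OF refl sets_pair_measure_cong[OF refl sQ]] by simp
  have Am[measurable]: "A \<in> borel_measurable borel" unfolding A_def by measurable
  have Abnd: "\<bar>A z\<bar> \<le> B" for z
  proof -
    have "\<bar>A z\<bar> \<le> (\<integral>w. \<bar>g z w\<bar> \<partial>Q)" unfolding A_def by (rule integral_abs_bound)
    also have "\<dots> \<le> (\<integral>w. B \<partial>Q)"
      by (intro integral_mono Q.integrable_const_bound[where B=B]) (auto simp: bnd B0)
    finally show ?thesis using B0 Q.prob_space by simp
  qed
  have "AE \<omega> in N. real_cond_exp N ?F (\<lambda>\<omega>. g (Z \<omega>) (W \<omega>)) \<omega> = A (Z \<omega>)"
  proof (rule F.real_cond_exp_charact)
    show "integrable N (\<lambda>\<omega>. g (Z \<omega>) (W \<omega>))"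
      by (intro N.integrable_const_bound[where B=B]) (auto simp: bnd)
    show "integrable N (\<lambda>\<omega>. A (Z \<omega>))"
      by (intro N.integrable_const_bound[where B=B]) (auto simp: Abnd)
    show "(\<lambda>\<omega>. A (Z \<omega>)) \<in> borel_measurable ?F"
      by (rule measurable_compose[OF measurable_vimage_algebra1 Am]) auto
    fix S assume "S \<in> sets ?F"
    then obtain C where C: "C \<in> sets borel" and S: "S = Z -` C \<inter> space N"
      by (auto simp: sets_vimage_algebra2)
    have "(\<integral>\<omega>\<in>S. g (Z \<omega>) (W \<omega>) \<partial>N) = (\<integral>\<omega>. indicator C (Z \<omega>) * g (Z \<omega>) (W \<omega>) \<partial>N)"
      unfolding set_lebesgue_integral_def S
      by (intro Bochner_Integration.integral_cong) (auto split: split_indicator)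
    also have "\<dots> = (\<integral>p. indicator C (fst p) * g (fst p) (snd p) \<partial>(Q \<Otimes>\<^sub>M Q))"
      unfolding joint[symmetric] using C by (subst integral_distr) auto
    also have "\<dots> = (\<integral>z. (\<integral>w. indicator C z * g z w \<partial>Q) \<partial>Q)"
      using C by (subst QQ.integral_fst'[symmetric])
        (auto intro!: QQf.integrable_const_bound[where B=B] simp: bnd B0 abs_mult split: split_indicator)
    also have "\<dots> = (\<integral>z. indicator C z * A z \<partial>Q)"
      unfolding A_def by simp
    also have "\<dots> = (\<integral>\<omega>. indicator C (Z \<omega>) * A (Z \<omega>) \<partial>N)"
    proof -
      have "(\<integral>z. indicator C z * A z \<partial>distr N borel Z) = (\<integral>\<omega>. indicator C (Z \<omega>) * A (Z \<omega>) \<partial>N)"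
        using C by (subst integral_distr) auto
      then show ?thesis by (simp add: dZ)
    qed
    also have "\<dots> = (\<integral>\<omega>\<in>S. A (Z \<omega>) \<partial>N)"
      unfolding set_lebesgue_integral_def S
      by (intro Bochner_Integration.integral_cong) (auto split: split_indicator)
    finally show "(\<integral>\<omega>\<in>S. g (Z \<omega>) (W \<omega>) \<partial>N) = (\<integral>\<omega>\<in>S. A (Z \<omega>) \<partial>N)" .
  qed
  then show ?thesis unfolding A_def .
qed




lemma cosd: "cos ((a - b) \<bullet> s) = cos (s \<bullet> a) * cos (s \<bullet> b) + sin (s \<bullet> a) * sin (s \<bullet> b)"
  for a b s :: "'a::euclidean_space"
  by (simp only: inner_diff_left cos_diff inner_commute[of a s] inner_commute[of b s])

lemma b3:
  fixes a b c d :: real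
  assumes "\<bar>a\<bar> \<le> 1" "\<bar>b\<bar> \<le> 1" "\<bar>c\<bar> \<le> 1" "\<bar>d\<bar> \<le> 1"
  shows "\<bar>1 - (a * c + b * d)\<bar> \<le> 3"
proof -
  have "\<bar>a * c\<bar> \<le> 1" unfolding abs_mult using assms by (intro mult_le_one) auto
  moreover have "\<bar>b * d\<bar> \<le> 1" unfolding abs_mult using assms by (intro mult_le_one) auto
  ultimately show ?thesis by linarith
qed

lemma b2: "\<bar>1 - cos (x::real)\<bar> \<le> 2" using abs_cos_le_one[of x] by linarith

locale side =
  fixes \<mu> :: "'a::euclidean_space measure" and Q :: "'a measure"
  assumes fmu: "finite_measure \<mu>" and smu: "sets \<mu> = sets borel"
    and pQ: "prob_space Q" and sQ: "sets Q = sets borel"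
begin

sublocale mu: finite_measure \<mu> by (rule fmu)
sublocale Q: prob_space Q by (rule pQ)
sublocale muQ: pair_sigma_finite \<mu> Q by unfold_locales
sublocale QQ: pair_sigma_finite Q Q by unfold_locales

lemma idmu[measurable]: "(\<lambda>x. x) \<in> measurable \<mu> borel" by (rule measurable_ident_sets[OF smu])
lemma idQ[measurable]: "(\<lambda>x. x) \<in> measurable Q borel" by (rule measurable_ident_sets[OF sQ])

definition "cQ s = (\<integral>x. cos (s \<bullet> x) \<partial>Q)"
definition "sQ s = (\<integral>x. sin (s \<bullet> x) \<partial>Q)"
definition "Cf s x = cos (s \<bullet> x) - cQ s"
definition "Sf s x = sin (s \<bullet> x) - sQ s"
definition "kf s x1 x4 = Cf s x1 * Cf s x4 + Sf s x1 * Sf s x4"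
definition "DPhi x1 x4 = levy_psi \<mu> (x1 - x4) - (\<integral>x. levy_psi \<mu> (x4 - x) \<partial>Q)
   - (\<integral>x. levy_psi \<mu> (x - x1) \<partial>Q) + (\<integral>z. (\<integral>x. levy_psi \<mu> (z - x) \<partial>Q) \<partial>Q)"

lemma cQ_meas[measurable]: "cQ \<in> borel_measurable borel"
  unfolding cQ_def by measurable
lemma sQ_meas[measurable]: "sQ \<in> borel_measurable borel"
  unfolding sQ_def by measurable

lemma cQ_bnd: "\<bar>cQ s\<bar> \<le> 1"
proof -
  have "\<bar>cQ s\<bar> \<le> (\<integral>x. \<bar>cos (s \<bullet> x)\<bar> \<partial>Q)" unfolding cQ_def by (rule integral_abs_bound)
  also have "\<dots> \<le> (\<integral>x. 1 \<partial>Q)"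
    by (intro integral_mono Q.integrable_const_bound[where B=1]) auto
  finally show ?thesis by (simp add: Q.prob_space)
qed
lemma sQ_bnd: "\<bar>sQ s\<bar> \<le> 1"
proof -
  have "\<bar>sQ s\<bar> \<le> (\<integral>x. \<bar>sin (s \<bullet> x)\<bar> \<partial>Q)" unfolding sQ_def by (rule integral_abs_bound)
  also have "\<dots> \<le> (\<integral>x. 1 \<partial>Q)"
    by (intro integral_mono Q.integrable_const_bound[where B=1]) auto
  finally show ?thesis by (simp add: Q.prob_space)
qed

lemma Cf_bnd: "\<bar>Cf s x\<bar> \<le> 2" unfolding Cf_def using cQ_bnd[of s] abs_cos_le_one[of "s \<bullet> x"] by linarith
lemma Sf_bnd: "\<bar>Sf s x\<bar> \<le> 2" unfolding Sf_def using sQ_bnd[of s] abs_sin_le_one[of "s \<bullet> x"] by linarith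
lemma kf_bnd: "\<bar>kf s x1 x4\<bar> \<le> 8"
proof -
  have "\<bar>Cf s x1 * Cf s x4\<bar> \<le> 2 * 2" unfolding abs_mult
    by (intro mult_mono Cf_bnd) auto
  moreover have "\<bar>Sf s x1 * Sf s x4\<bar> \<le> 2 * 2" unfolding abs_mult
    by (intro mult_mono Sf_bnd) auto
  ultimately show ?thesis unfolding kf_def by linarith
qed

lemma Cf_meas[measurable]: "case_prod Cf \<in> borel_measurable (borel \<Otimes>\<^sub>M borel)"
  unfolding Cf_def by measurable
lemma Sf_meas[measurable]: "case_prod Sf \<in> borel_measurable (borel \<Otimes>\<^sub>M borel)"
  unfolding Sf_def by measurable

lemma intmu: "f \<in> borel_measurable borel \<Longrightarrow> (\<And>s. \<bar>f s\<bar> \<le> (B::real)) \<Longrightarrow> integrable \<mu> f"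
  by (intro mu.integrable_const_bound[where B=B]) (auto simp: measurable_cong_sets[OF smu refl])
lemma intQ: "f \<in> borel_measurable borel \<Longrightarrow> (\<And>s. \<bar>f s\<bar> \<le> (B::real)) \<Longrightarrow> integrable Q f"
  by (intro Q.integrable_const_bound[where B=B]) (auto simp: measurable_cong_sets[OF sQ refl])

lemma Fub:
  fixes h :: "'a \<Rightarrow> 'a \<Rightarrow> real"
  assumes [measurable]: "case_prod h \<in> borel_measurable (borel \<Otimes>\<^sub>M borel)" and b: "\<And>s x. \<bar>h s x\<bar> \<le> B"
  shows "(\<integral>x. (\<integral>s. h s x \<partial>\<mu>) \<partial>Q) = (\<integral>s. (\<integral>x. h s x \<partial>Q) \<partial>\<mu>)"
proof (rule muQ.Fubini_integral)
  interpret f: finite_measure "\<mu> \<Otimes>\<^sub>M Q" by (intro finite_measure_pair_measure) unfold_locales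
  have "case_prod h \<in> borel_measurable (\<mu> \<Otimes>\<^sub>M Q)"
    using measurable_cong_sets[OF sets_pair_measure_cong[OF smu sQ] refl] by simp
  then show "integrable (\<mu> \<Otimes>\<^sub>M Q) (case_prod h)"
    by (intro f.integrable_const_bound[where B=B]) (auto simp: b)
qed

lemma psi_eq: "levy_psi \<mu> u = (\<integral>s. 1 - cos (u \<bullet> s) \<partial>\<mu>)" by (simp add: levy_psi_def)

lemma psi_meas[measurable]: "levy_psi \<mu> \<in> borel_measurable borel"
proof -
  have "(\<lambda>u. \<integral>s. 1 - cos (u \<bullet> s) \<partial>\<mu>) \<in> borel_measurable borel" by measurable
  then show ?thesis by (simp add: levy_psi_def[abs_def])
qed

lemma psi_bnd: "\<bar>levy_psi \<mu> u\<bar> \<le> 2 * measure \<mu> (space \<mu>)"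
proof -
  have "\<bar>levy_psi \<mu> u\<bar> \<le> (\<integral>s. \<bar>1 - cos (u \<bullet> s)\<bar> \<partial>\<mu>)" unfolding psi_eq by (rule integral_abs_bound)
  also have "\<dots> \<le> (\<integral>s. 2 \<partial>\<mu>)"
    by (intro integral_mono intmu[where B=2]) (auto simp: b2)
  finally show ?thesis by simp
qed

lemma inner1: "(\<integral>x. 1 - (a * cos (s \<bullet> x) + b * sin (s \<bullet> x)) \<partial>Q) = 1 - (a * cQ s + b * sQ s)"
proof -
  have i1: "integrable Q (\<lambda>x. cos (s \<bullet> x))" by (rule intQ[where B=1]) auto
  have i2: "integrable Q (\<lambda>x. sin (s \<bullet> x))" by (rule intQ[where B=1]) auto
  show ?thesis unfolding cQ_def sQ_def
    using i1 i2 by (simp add: Q.prob_space)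
qed

lemma A4: "(\<integral>x. levy_psi \<mu> (u - x) \<partial>Q) = (\<integral>s. 1 - (cos (s \<bullet> u) * cQ s + sin (s \<bullet> u) * sQ s) \<partial>\<mu>)"
proof -
  have "(\<integral>x. levy_psi \<mu> (u - x) \<partial>Q) = (\<integral>x. (\<integral>s. 1 - (cos (s \<bullet> u) * cos (s \<bullet> x) + sin (s \<bullet> u) * sin (s \<bullet> x)) \<partial>\<mu>) \<partial>Q)"
    unfolding psi_eq cosd ..
  also have "\<dots> = (\<integral>s. (\<integral>x. 1 - (cos (s \<bullet> u) * cos (s \<bullet> x) + sin (s \<bullet> u) * sin (s \<bullet> x)) \<partial>Q) \<partial>\<mu>)"
    by (rule Fub[where B=3]) (auto intro!: b3)
  also have "\<dots> = (\<integral>s. 1 - (cos (s \<bullet> u) * cQ s + sin (s \<bullet> u) * sQ s) \<partial>\<mu>)"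
    by (simp only: inner1)
  finally show ?thesis .
qed

lemma psi_sym: "levy_psi \<mu> (x - u) = levy_psi \<mu> (u - x)"
proof -
  have "x - u = - (u - x)" by simp
  then show ?thesis unfolding psi_eq by (simp only: inner_minus_left cos_minus)
qed

lemma A1: "(\<integral>x. levy_psi \<mu> (x - u) \<partial>Q) = (\<integral>s. 1 - (cos (s \<bullet> u) * cQ s + sin (s \<bullet> u) * sQ s) \<partial>\<mu>)"
proof -
  have "(\<integral>x. levy_psi \<mu> (x - u) \<partial>Q) = (\<integral>x. levy_psi \<mu> (u - x) \<partial>Q)"
    by (rule Bochner_Integration.integral_cong) (auto intro: psi_sym)
  then show ?thesis using A4 by simp
qed

lemma inner2: "(\<integral>x. 1 - (cos (s \<bullet> x) * a + sin (s \<bullet> x) * b) \<partial>Q) = 1 - (cQ s * a + sQ s * b)"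
proof -
  have i1: "integrable Q (\<lambda>x. cos (s \<bullet> x))" by (rule intQ[where B=1]) auto
  have i2: "integrable Q (\<lambda>x. sin (s \<bullet> x))" by (rule intQ[where B=1]) auto
  show ?thesis unfolding cQ_def sQ_def
    using i1 i2 by (simp add: Q.prob_space)
qed

lemma mm: "(\<integral>z. (\<integral>x. levy_psi \<mu> (z - x) \<partial>Q) \<partial>Q) = (\<integral>s. 1 - (cQ s * cQ s + sQ s * sQ s) \<partial>\<mu>)"
proof -
  have "(\<integral>z. (\<integral>x. levy_psi \<mu> (z - x) \<partial>Q) \<partial>Q) = (\<integral>z. (\<integral>s. 1 - (cos (s \<bullet> z) * cQ s + sin (s \<bullet> z) * sQ s) \<partial>\<mu>) \<partial>Q)"
    by (simp only: A4)
  also have "\<dots> = (\<integral>s. (\<integral>z. 1 - (cos (s \<bullet> z) * cQ s + sin (s \<bullet> z) * sQ s) \<partial>Q) \<partial>\<mu>)"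
    by (rule Fub[where B=3]) (auto intro!: b3 cQ_bnd sQ_bnd)
  also have "\<dots> = (\<integral>s. 1 - (cQ s * cQ s + sQ s * sQ s) \<partial>\<mu>)"
    by (simp only: inner2)
  finally show ?thesis .
qed

lemma DPhi_eq: "DPhi x1 x4 = - (\<integral>s. kf s x1 x4 \<partial>\<mu>)"
proof -
  let ?f1 = "\<lambda>s. 1 - cos ((x1 - x4) \<bullet> s)"
  let ?f2 = "\<lambda>s. 1 - (cos (s \<bullet> x4) * cQ s + sin (s \<bullet> x4) * sQ s)"
  let ?f3 = "\<lambda>s. 1 - (cos (s \<bullet> x1) * cQ s + sin (s \<bullet> x1) * sQ s)"
  let ?f4 = "\<lambda>s. 1 - (cQ s * cQ s + sQ s * sQ s)"
  have i1: "integrable \<mu> ?f1" by (rule intmu[where B=2]) (auto simp: b2)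
  have i2: "integrable \<mu> ?f2" by (rule intmu[where B=3]) (auto intro!: b3 cQ_bnd sQ_bnd)
  have i3: "integrable \<mu> ?f3" by (rule intmu[where B=3]) (auto intro!: b3 cQ_bnd sQ_bnd)
  have i4: "integrable \<mu> ?f4" by (rule intmu[where B=3]) (auto intro!: b3 cQ_bnd sQ_bnd)
  have "DPhi x1 x4 = integral\<^sup>L \<mu> ?f1 - integral\<^sup>L \<mu> ?f2 - integral\<^sup>L \<mu> ?f3 + integral\<^sup>L \<mu> ?f4"
    unfolding DPhi_def mm unfolding A4 A1 psi_eq[of "x1 - x4"] ..
  also have "\<dots> = (\<integral>s. ?f1 s - ?f2 s - ?f3 s + ?f4 s \<partial>\<mu>)"
    using i1 i2 i3 i4 by (simp only: Bochner_Integration.integral_add Bochner_Integration.integral_diff Bochner_Integration.integrable_diff)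
  also have "\<dots> = (\<integral>s. - kf s x1 x4 \<partial>\<mu>)"
    by (intro Bochner_Integration.integral_cong refl) (simp only: cosd, simp add: kf_def Cf_def Sf_def algebra_simps)
  finally show ?thesis by simp
qed

lemma kf_meas[measurable]: "(\<lambda>(s, x1, x4). kf s x1 x4) \<in> borel_measurable (borel \<Otimes>\<^sub>M (borel \<Otimes>\<^sub>M borel))"
  unfolding kf_def Cf_def Sf_def by measurable

lemma DPhi_meas: "case_prod DPhi \<in> borel_measurable (borel \<Otimes>\<^sub>M borel)"
  unfolding DPhi_def by measurable

lemma Cf_meas2[measurable (raw)]: "f \<in> borel_measurable M \<Longrightarrow> g \<in> borel_measurable M \<Longrightarrow> (\<lambda>x. Cf (f x) (g x)) \<in> borel_measurable M"
  using measurable_compose[OF measurable_Pair Cf_meas, of f M g] by simp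
lemma Sf_meas2[measurable (raw)]: "f \<in> borel_measurable M \<Longrightarrow> g \<in> borel_measurable M \<Longrightarrow> (\<lambda>x. Sf (f x) (g x)) \<in> borel_measurable M"
  using measurable_compose[OF measurable_Pair Sf_meas, of f M g] by simp
lemma kf_meas2[measurable (raw)]: "f \<in> borel_measurable M \<Longrightarrow> g \<in> borel_measurable M \<Longrightarrow> h \<in> borel_measurable M \<Longrightarrow> (\<lambda>x. kf (f x) (g x) (h x)) \<in> borel_measurable M"
  using measurable_compose[OF measurable_Pair[OF _ measurable_Pair] kf_meas, of f M g h] by simp
lemma DPhi_meas2[measurable (raw)]: "f \<in> borel_measurable M \<Longrightarrow> g \<in> borel_measurable M \<Longrightarrow> (\<lambda>x. DPhi (f x) (g x)) \<in> borel_measurable M"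
  using measurable_compose[OF measurable_Pair DPhi_meas, of f M g] by simp


end



lemma intbnd: "finite_measure M \<Longrightarrow> f \<in> borel_measurable M \<Longrightarrow> (\<And>x. \<bar>f x\<bar> \<le> (B::real)) \<Longrightarrow> integrable M f"
  by (rule finite_measure.integrable_const_bound[where B=B]) auto

lemma intabs: "finite_measure M \<Longrightarrow> f \<in> borel_measurable M \<Longrightarrow> (\<And>x. \<bar>f x\<bar> \<le> (B::real)) \<Longrightarrow> \<bar>integral\<^sup>L M f\<bar> \<le> B * measure M (space M)"
proof -
  assume fm: "finite_measure M" and m: "f \<in> borel_measurable M" and b: "\<And>x. \<bar>f x\<bar> \<le> B"
  have "\<bar>integral\<^sup>L M f\<bar> \<le> (\<integral>x. \<bar>f x\<bar> \<partial>M)" by (rule integral_abs_bound)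
  also have "\<dots> \<le> (\<integral>x. B \<partial>M)"
  proof -
    have B0: "0 \<le> B" using b[of undefined] by linarith
    have ma: "(\<lambda>x. \<bar>f x\<bar>) \<in> borel_measurable M" using m by measurable
    show ?thesis
      by (intro integral_mono intbnd[OF fm, where B=B] finite_measure.integrable_const fm) (use ma b B0 in auto)
  qed
  finally show ?thesis by (simp add: mult.commute)
qed

lemma prod_bnd: "\<bar>a\<bar> \<le> A \<Longrightarrow> \<bar>b\<bar> \<le> B \<Longrightarrow> \<bar>(a::real) * b\<bar> \<le> A * B"
  unfolding abs_mult by (intro mult_mono) auto

locale dc =
  fixes \<mu> :: "'a::euclidean_space measure" and \<nu> :: "'b::euclidean_space measure"
    and P :: "('a \<times> 'b) measure"
  assumes fmu: "finite_measure \<mu>" and fnu: "finite_measure \<nu>"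
    and smu: "sets \<mu> = sets borel" and snu: "sets \<nu> = sets borel"
    and pP: "prob_space P" and sP: "sets P = sets borel"
    and symnu: "distr \<nu> borel uminus = \<nu>"
begin

sublocale P: prob_space P by (rule pP)
sublocale PP: pair_sigma_finite P P by unfold_locales

lemma fstP[measurable]: "fst \<in> measurable P borel"
proof -
  have "fst \<in> measurable (borel \<Otimes>\<^sub>M borel) (borel::'a measure)" by simp
  then show ?thesis using sP borel_prod[where 'a='a and 'b='b] 
    by (metis measurable_cong_sets)
qed
lemma sndP[measurable]: "snd \<in> measurable P borel"
proof -
  have "snd \<in> measurable (borel \<Otimes>\<^sub>M borel) (borel::'b measure)" by simp
  then show ?thesis using sP borel_prod[where 'a='a and 'b='b] 
    by (metis measurable_cong_sets)
qed

lemma spP: "space P = UNIV" using sets_eq_imp_space_eq[OF sP] by simp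
lemma spPP: "space (P \<Otimes>\<^sub>M P) = UNIV" by (simp add: space_pair_measure spP)

sublocale sx: side \<mu> "distr P borel fst"
  by (intro side.intro fmu smu P.prob_space_distr fstP) simp
sublocale sy: side \<nu> "distr P borel snd"
  by (intro side.intro fnu snu P.prob_space_distr sndP) simp

lemma idmu[measurable]: "(\<lambda>x. x) \<in> measurable \<mu> borel" by (rule measurable_ident_sets[OF smu])
lemma idnu[measurable]: "(\<lambda>x. x) \<in> measurable \<nu> borel" by (rule measurable_ident_sets[OF snu])

lemma cX: "sx.cQ s = (\<integral>z. cos (s \<bullet> fst z) \<partial>P)" unfolding sx.cQ_def by (subst integral_distr) auto
lemma sX: "sx.sQ s = (\<integral>z. sin (s \<bullet> fst z) \<partial>P)" unfolding sx.sQ_def by (subst integral_distr) auto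
lemma cY: "sy.cQ t = (\<integral>z. cos (t \<bullet> snd z) \<partial>P)" unfolding sy.cQ_def by (subst integral_distr) auto
lemma sY: "sy.sQ t = (\<integral>z. sin (t \<bullet> snd z) \<partial>P)" unfolding sy.sQ_def by (subst integral_distr) auto

definition "aa s t = (\<integral>z. sx.Cf s (fst z) * sy.Cf t (snd z) \<partial>P)"
definition "bb s t = (\<integral>z. sx.Sf s (fst z) * sy.Sf t (snd z) \<partial>P)"
definition "pp s t = (\<integral>z. sx.Cf s (fst z) * sy.Sf t (snd z) \<partial>P)"
definition "qq s t = (\<integral>z. sx.Sf s (fst z) * sy.Cf t (snd z) \<partial>P)"

lemma prodint:
  fixes g :: "'a \<times> 'b \<Rightarrow> real"
  assumes [measurable]: "g \<in> borel_measurable P" and b: "\<And>z. \<bar>g z\<bar> \<le> B"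
  shows "(\<integral>w. g (fst w) * g (snd w) \<partial>(P \<Otimes>\<^sub>M P)) = (\<integral>z. g z \<partial>P)\<^sup>2"
proof -
  have fPP: "finite_measure (P \<Otimes>\<^sub>M P)" by (intro finite_measure_pair_measure) unfold_locales
  have int: "integrable (P \<Otimes>\<^sub>M P) (\<lambda>w. g (fst w) * g (snd w))"
    by (rule intbnd[OF fPP, where B="B*B"]) (auto intro!: prod_bnd b)
  have "(\<integral>w. g (fst w) * g (snd w) \<partial>(P \<Otimes>\<^sub>M P)) = (\<integral>x. (\<integral>y. g x * g y \<partial>P) \<partial>P)"
    using PP.integral_fst'[OF int] by simp
  also have "\<dots> = (\<integral>z. g z \<partial>P)\<^sup>2" by (simp add: power2_eq_square mult.commute)
  finally show ?thesis .
qed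

lemma core_inner:
  "(\<integral>w. sx.kf s (fst (fst w)) (fst (snd w)) * sy.kf t (snd (fst w)) (snd (snd w)) \<partial>(P \<Otimes>\<^sub>M P))
    = (aa s t)\<^sup>2 + (pp s t)\<^sup>2 + (qq s t)\<^sup>2 + (bb s t)\<^sup>2"
proof -
  have fPP: "finite_measure (P \<Otimes>\<^sub>M P)" by (intro finite_measure_pair_measure) unfold_locales
  define u1 where "u1 z = sx.Cf s (fst z) * sy.Cf t (snd z)" for z
  define u2 where "u2 z = sx.Cf s (fst z) * sy.Sf t (snd z)" for z
  define u3 where "u3 z = sx.Sf s (fst z) * sy.Cf t (snd z)" for z
  define u4 where "u4 z = sx.Sf s (fst z) * sy.Sf t (snd z)" for z
  have m[measurable]: "u1 \<in> borel_measurable P" "u2 \<in> borel_measurable P" "u3 \<in> borel_measurable P" "u4 \<in> borel_measurable P"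
    unfolding u1_def u2_def u3_def u4_def by measurable
  have b: "\<bar>u1 z\<bar> \<le> 2*2" "\<bar>u2 z\<bar> \<le> 2*2" "\<bar>u3 z\<bar> \<le> 2*2" "\<bar>u4 z\<bar> \<le> 2*2" for z
    unfolding u1_def u2_def u3_def u4_def by (intro prod_bnd sx.Cf_bnd sx.Sf_bnd sy.Cf_bnd sy.Sf_bnd)+
  have ii: "integrable (P \<Otimes>\<^sub>M P) (\<lambda>w. u (fst w) * u (snd w))"
    if "u \<in> borel_measurable P" "\<And>z. \<bar>u z\<bar> \<le> 2*2" for u :: "'a \<times> 'b \<Rightarrow> real"
  proof (rule intbnd[OF fPP, where B="(2*2)*(2*2)"])
    have [measurable]: "u \<in> borel_measurable P" by (rule that(1))
    show "(\<lambda>w. u (fst w) * u (snd w)) \<in> borel_measurable (P \<Otimes>\<^sub>M P)" by measurable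
    show "\<bar>u (fst w) * u (snd w)\<bar> \<le> (2*2)*(2*2)" for w by (rule prod_bnd; rule that(2))
  qed
  have "(\<integral>w. sx.kf s (fst (fst w)) (fst (snd w)) * sy.kf t (snd (fst w)) (snd (snd w)) \<partial>(P \<Otimes>\<^sub>M P))
     = (\<integral>w. u1 (fst w) * u1 (snd w) + u2 (fst w) * u2 (snd w) + u3 (fst w) * u3 (snd w) + u4 (fst w) * u4 (snd w) \<partial>(P \<Otimes>\<^sub>M P))"
    by (intro Bochner_Integration.integral_cong refl) (simp add: sx.kf_def sy.kf_def u1_def u2_def u3_def u4_def algebra_simps)
  also have "\<dots> = (\<integral>w. u1 (fst w) * u1 (snd w) \<partial>(P \<Otimes>\<^sub>M P)) + (\<integral>w. u2 (fst w) * u2 (snd w) \<partial>(P \<Otimes>\<^sub>M P))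
     + (\<integral>w. u3 (fst w) * u3 (snd w) \<partial>(P \<Otimes>\<^sub>M P)) + (\<integral>w. u4 (fst w) * u4 (snd w) \<partial>(P \<Otimes>\<^sub>M P))"
    using ii[OF m(1) b(1)] ii[OF m(2) b(2)] ii[OF m(3) b(3)] ii[OF m(4) b(4)]
    by (simp only: Bochner_Integration.integral_add Bochner_Integration.integrable_add)
  also have "\<dots> = (aa s t)\<^sup>2 + (pp s t)\<^sup>2 + (qq s t)\<^sup>2 + (bb s t)\<^sup>2"
    unfolding prodint[OF m(1) b(1)] prodint[OF m(2) b(2)] prodint[OF m(3) b(3)] prodint[OF m(4) b(4)]
    unfolding aa_def bb_def pp_def qq_def u1_def u2_def u3_def u4_def ..
  finally show ?thesis .
qed

definition "FF s t w = sx.kf s (fst (fst w)) (fst (snd w)) * sy.kf t (snd (fst w)) (snd (snd w))"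

lemma FF_meas[measurable (raw)]:
  "f \<in> borel_measurable M \<Longrightarrow> g \<in> borel_measurable M \<Longrightarrow> h \<in> measurable M (P \<Otimes>\<^sub>M P) \<Longrightarrow>
   (\<lambda>x. FF (f x) (g x) (h x)) \<in> borel_measurable M"
proof -
  assume f: "f \<in> borel_measurable M" and g: "g \<in> borel_measurable M" and h: "h \<in> measurable M (P \<Otimes>\<^sub>M P)"
  have h1: "(\<lambda>x. fst (h x)) \<in> measurable M P" by (rule measurable_compose[OF h measurable_fst])
  have h2: "(\<lambda>x. snd (h x)) \<in> measurable M P" by (rule measurable_compose[OF h measurable_snd])
  have a1: "(\<lambda>x. fst (fst (h x))) \<in> borel_measurable M" by (rule measurable_compose[OF h1 fstP])
  have a2: "(\<lambda>x. fst (snd (h x))) \<in> borel_measurable M" by (rule measurable_compose[OF h2 fstP])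
  have a3: "(\<lambda>x. snd (fst (h x))) \<in> borel_measurable M" by (rule measurable_compose[OF h1 sndP])
  have a4: "(\<lambda>x. snd (snd (h x))) \<in> borel_measurable M" by (rule measurable_compose[OF h2 sndP])
  show ?thesis unfolding FF_def
    by (intro borel_measurable_times sx.kf_meas2 sy.kf_meas2 f g a1 a2 a3 a4)
qed

lemma FF_bnd: "\<bar>FF s t w\<bar> \<le> 64"
  using prod_bnd[OF sx.kf_bnd sy.kf_bnd] unfolding FF_def by simp

lemma swap:
  "(\<integral>w. (\<integral>s. (\<integral>t. FF s t w \<partial>\<nu>) \<partial>\<mu>) \<partial>(P \<Otimes>\<^sub>M P)) = (\<integral>s. (\<integral>t. (\<integral>w. FF s t w \<partial>(P \<Otimes>\<^sub>M P)) \<partial>\<nu>) \<partial>\<mu>)"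
proof -
  interpret PPf: finite_measure "P \<Otimes>\<^sub>M P" by (intro finite_measure_pair_measure) unfold_locales
  interpret A: pair_sigma_finite \<mu> "P \<Otimes>\<^sub>M P" by unfold_locales
  interpret B: pair_sigma_finite \<nu> "P \<Otimes>\<^sub>M P" by unfold_locales
  have fA: "finite_measure (\<mu> \<Otimes>\<^sub>M (P \<Otimes>\<^sub>M P))" by (intro finite_measure_pair_measure) unfold_locales
  have fB: "finite_measure (\<nu> \<Otimes>\<^sub>M (P \<Otimes>\<^sub>M P))" by (intro finite_measure_pair_measure) unfold_locales
  have "(\<integral>w. (\<integral>s. (\<integral>t. FF s t w \<partial>\<nu>) \<partial>\<mu>) \<partial>(P \<Otimes>\<^sub>M P)) = (\<integral>s. (\<integral>w. (\<integral>t. FF s t w \<partial>\<nu>) \<partial>(P \<Otimes>\<^sub>M P)) \<partial>\<mu>)"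
  proof (rule A.Fubini_integral)
    have m0: "(\<lambda>x. \<integral>t. FF (fst x) t (snd x) \<partial>\<nu>) \<in> borel_measurable (\<mu> \<Otimes>\<^sub>M (P \<Otimes>\<^sub>M P))"
    proof (rule sy.mu.borel_measurable_lebesgue_integral)
      have "(\<lambda>y. FF (fst (fst y)) (snd y) (snd (fst y))) \<in> borel_measurable ((\<mu> \<Otimes>\<^sub>M (P \<Otimes>\<^sub>M P)) \<Otimes>\<^sub>M \<nu>)"
        by (intro FF_meas measurable_compose[OF measurable_fst measurable_compose[OF measurable_fst idmu]]
            measurable_compose[OF measurable_snd idnu] measurable_compose[OF measurable_fst measurable_snd])
      then show "(\<lambda>(x, t). FF (fst x) t (snd x)) \<in> borel_measurable ((\<mu> \<Otimes>\<^sub>M (P \<Otimes>\<^sub>M P)) \<Otimes>\<^sub>M \<nu>)"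
        by (simp add: case_prod_beta)
    qed
    have m: "(\<lambda>(s, w). \<integral>t. FF s t w \<partial>\<nu>) \<in> borel_measurable (\<mu> \<Otimes>\<^sub>M (P \<Otimes>\<^sub>M P))"
      using m0 by (simp add: case_prod_beta)
    show "integrable (\<mu> \<Otimes>\<^sub>M (P \<Otimes>\<^sub>M P)) (\<lambda>(s, w). \<integral>t. FF s t w \<partial>\<nu>)"
    proof (rule intbnd[OF fA m, where B="64 * measure \<nu> (space \<nu>)"])
      fix x :: "'a \<times> ('a \<times> 'b) \<times> ('a \<times> 'b)"
      show "\<bar>(case x of (s, w) \<Rightarrow> \<integral>t. FF s t w \<partial>\<nu>)\<bar> \<le> 64 * measure \<nu> (space \<nu>)"
      proof -
        obtain s w where Pair: "x = (s, w)" by (metis surj_pair)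
        have "(\<lambda>t. FF s t w) \<in> borel_measurable \<nu>"
          by (intro FF_meas measurable_const idnu) (simp_all add: spPP)
        from intabs[OF fnu this, of 64] have "\<bar>\<integral>t. FF s t w \<partial>\<nu>\<bar> \<le> 64 * measure \<nu> (space \<nu>)"
          using FF_bnd by blast
        then show ?thesis using Pair by simp
      qed
    qed
  qed
  also have "\<dots> = (\<integral>s. (\<integral>t. (\<integral>w. FF s t w \<partial>(P \<Otimes>\<^sub>M P)) \<partial>\<nu>) \<partial>\<mu>)"
  proof (intro Bochner_Integration.integral_cong refl B.Fubini_integral)
    fix s
    show "integrable (\<nu> \<Otimes>\<^sub>M (P \<Otimes>\<^sub>M P)) (\<lambda>(t, w). FF s t w)"
    proof (rule intbnd[OF fB _ , where B=64])
      have "(\<lambda>x. FF s (fst x) (snd x)) \<in> borel_measurable (\<nu> \<Otimes>\<^sub>M (P \<Otimes>\<^sub>M P))"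
        by (intro FF_meas measurable_const measurable_compose[OF measurable_fst idnu] measurable_snd) simp
      then show "(\<lambda>(t, w). FF s t w) \<in> borel_measurable (\<nu> \<Otimes>\<^sub>M (P \<Otimes>\<^sub>M P))"
        by (simp add: case_prod_beta)
    qed (use FF_bnd in \<open>auto simp del: FF_def\<close>)
  qed
  finally show ?thesis .
qed

lemma intP: "f \<in> borel_measurable P \<Longrightarrow> (\<And>x. \<bar>f x\<bar> \<le> (B::real)) \<Longrightarrow> integrable P f"
  by (rule intbnd[OF P.finite_measure_axioms])

lemma ipP:
  fixes f g :: "'a \<times> 'b \<Rightarrow> real"
  assumes [measurable]: "f \<in> borel_measurable P" "g \<in> borel_measurable P"
    and bf: "\<And>z. \<bar>f z\<bar> \<le> 1" and bg: "\<And>z. \<bar>g z\<bar> \<le> 1"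
  shows "integrable P (\<lambda>z. f z * g z)"
proof (rule intP[where B=1])
  show "(\<lambda>z. f z * g z) \<in> borel_measurable P" by measurable
  show "\<bar>f z * g z\<bar> \<le> 1" for z using prod_bnd[OF bf[of z] bg[of z]] by simp
qed

lemma cov:
  fixes f g :: "'a \<times> 'b \<Rightarrow> real"
  assumes [measurable]: "f \<in> borel_measurable P" "g \<in> borel_measurable P"
    and bf: "\<And>z. \<bar>f z\<bar> \<le> 1" and bg: "\<And>z. \<bar>g z\<bar> \<le> 1"
  shows "(\<integral>z. (f z - integral\<^sup>L P f) * (g z - integral\<^sup>L P g) \<partial>P) = (\<integral>z. f z * g z \<partial>P) - integral\<^sup>L P f * integral\<^sup>L P g"
proof -
  have i1: "integrable P f" by (rule intP[OF _ bf]) simp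
  have i2: "integrable P g" by (rule intP[OF _ bg]) simp
  have i3: "integrable P (\<lambda>z. f z * g z)" by (rule ipP) (auto intro: bf bg)
  have "(\<integral>z. (f z - integral\<^sup>L P f) * (g z - integral\<^sup>L P g) \<partial>P)
     = (\<integral>z. f z * g z - integral\<^sup>L P g * f z - integral\<^sup>L P f * g z + integral\<^sup>L P f * integral\<^sup>L P g \<partial>P)"
    by (intro Bochner_Integration.integral_cong refl) (simp add: algebra_simps)
  also have "\<dots> = (\<integral>z. f z * g z \<partial>P) - integral\<^sup>L P g * integral\<^sup>L P f - integral\<^sup>L P f * integral\<^sup>L P g + integral\<^sup>L P f * integral\<^sup>L P g"
    using i1 i2 i3 by (simp add: P.prob_space)
  finally show ?thesis by (simp add: algebra_simps)
qed

lemma int_cis: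
  fixes \<theta> :: "'a \<times> 'b \<Rightarrow> real"
  assumes [measurable]: "\<theta> \<in> borel_measurable P"
  shows "(\<integral>z. cis (\<theta> z) \<partial>P) = Complex (\<integral>z. cos (\<theta> z) \<partial>P) (\<integral>z. sin (\<theta> z) \<partial>P)"
proof -
  have m: "(\<lambda>z. cis (\<theta> z)) \<in> borel_measurable P"
    unfolding borel_measurable_complex_iff by simp
  have i: "integrable P (\<lambda>z. cis (\<theta> z))"
    by (rule P.integrable_const_bound[where B=1]) (auto simp: m)
  have "Re (\<integral>z. cis (\<theta> z) \<partial>P) = (\<integral>z. cos (\<theta> z) \<partial>P)"
    using integral_bounded_linear[OF bounded_linear_Re i] by simp
  moreover have "Im (\<integral>z. cis (\<theta> z) \<partial>P) = (\<integral>z. sin (\<theta> z) \<partial>P)"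
    using integral_bounded_linear[OF bounded_linear_Im i] by simp
  ultimately show ?thesis by (simp add: complex_eq_iff)
qed

definition "chi s t = (\<integral>z. cis (s \<bullet> fst z + t \<bullet> snd z) \<partial>P)"
definition "phi s = (\<integral>z. cis (s \<bullet> fst z) \<partial>P)"
definition "psi t = (\<integral>z. cis (t \<bullet> snd z) \<partial>P)"

lemma char_eq: "(cmod (chi s t - phi s * psi t))\<^sup>2 = (aa s t - bb s t)\<^sup>2 + (pp s t + qq s t)\<^sup>2"
proof -
  define c1 where "c1 z = cos (s \<bullet> fst z)" for z :: "'a \<times> 'b"
  define s1 where "s1 z = sin (s \<bullet> fst z)" for z :: "'a \<times> 'b"
  define c2 where "c2 z = cos (t \<bullet> snd z)" for z :: "'a \<times> 'b"
  define s2 where "s2 z = sin (t \<bullet> snd z)" for z :: "'a \<times> 'b"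
  have m[measurable]: "c1 \<in> borel_measurable P" "s1 \<in> borel_measurable P" "c2 \<in> borel_measurable P" "s2 \<in> borel_measurable P"
    unfolding c1_def s1_def c2_def s2_def by measurable
  have b: "\<bar>c1 z\<bar> \<le> 1" "\<bar>s1 z\<bar> \<le> 1" "\<bar>c2 z\<bar> \<le> 1" "\<bar>s2 z\<bar> \<le> 1" for z
    unfolding c1_def s1_def c2_def s2_def by auto
  have ip: "integrable P (\<lambda>z. f z * g z)" if "f \<in> borel_measurable P" "g \<in> borel_measurable P"
    "\<And>z. \<bar>f z\<bar> \<le> 1" "\<And>z. \<bar>g z\<bar> \<le> 1" for f g :: "'a \<times> 'b \<Rightarrow> real"
    by (rule ipP) (use that in auto)
  have cX': "sx.cQ s = integral\<^sup>L P c1" unfolding cX c1_def ..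
  have sX': "sx.sQ s = integral\<^sup>L P s1" unfolding sX s1_def ..
  have cY': "sy.cQ t = integral\<^sup>L P c2" unfolding cY c2_def ..
  have sY': "sy.sQ t = integral\<^sup>L P s2" unfolding sY s2_def ..
  have ea: "aa s t = (\<integral>z. c1 z * c2 z \<partial>P) - integral\<^sup>L P c1 * integral\<^sup>L P c2"
    unfolding aa_def sx.Cf_def sy.Cf_def cX' cY' by (subst cov[symmetric]) (auto simp: b c1_def c2_def)
  have eb: "bb s t = (\<integral>z. s1 z * s2 z \<partial>P) - integral\<^sup>L P s1 * integral\<^sup>L P s2"
    unfolding bb_def sx.Sf_def sy.Sf_def sX' sY' by (subst cov[symmetric]) (auto simp: b s1_def s2_def)
  have ep: "pp s t = (\<integral>z. c1 z * s2 z \<partial>P) - integral\<^sup>L P c1 * integral\<^sup>L P s2"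
    unfolding pp_def sx.Cf_def sy.Sf_def cX' sY' by (subst cov[symmetric]) (auto simp: b c1_def s2_def)
  have eq: "qq s t = (\<integral>z. s1 z * c2 z \<partial>P) - integral\<^sup>L P s1 * integral\<^sup>L P c2"
    unfolding qq_def sx.Sf_def sy.Cf_def sX' cY' by (subst cov[symmetric]) (auto simp: b s1_def c2_def)
  have "chi s t = Complex (\<integral>z. cos (s \<bullet> fst z + t \<bullet> snd z) \<partial>P) (\<integral>z. sin (s \<bullet> fst z + t \<bullet> snd z) \<partial>P)"
    unfolding chi_def by (rule int_cis) simp
  also have "(\<integral>z. cos (s \<bullet> fst z + t \<bullet> snd z) \<partial>P) = (\<integral>z. c1 z * c2 z - s1 z * s2 z \<partial>P)"
    unfolding c1_def c2_def s1_def s2_def cos_add ..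
  also have "\<dots> = (\<integral>z. c1 z * c2 z \<partial>P) - (\<integral>z. s1 z * s2 z \<partial>P)"
    using ip[OF m(1) m(3) b(1) b(3)] ip[OF m(2) m(4) b(2) b(4)] by simp
  also have "(\<integral>z. sin (s \<bullet> fst z + t \<bullet> snd z) \<partial>P) = (\<integral>z. s1 z * c2 z + c1 z * s2 z \<partial>P)"
    unfolding c1_def c2_def s1_def s2_def sin_add ..
  also have "\<dots> = (\<integral>z. s1 z * c2 z \<partial>P) + (\<integral>z. c1 z * s2 z \<partial>P)"
    using ip[OF m(2) m(3) b(2) b(3)] ip[OF m(1) m(4) b(1) b(4)] by simp
  finally have chi: "chi s t = Complex ((\<integral>z. c1 z * c2 z \<partial>P) - (\<integral>z. s1 z * s2 z \<partial>P)) ((\<integral>z. s1 z * c2 z \<partial>P) + (\<integral>z. c1 z * s2 z \<partial>P))" .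
  have phi: "phi s = Complex (integral\<^sup>L P c1) (integral\<^sup>L P s1)"
    unfolding phi_def c1_def s1_def by (rule int_cis) simp
  have psi: "psi t = Complex (integral\<^sup>L P c2) (integral\<^sup>L P s2)"
    unfolding psi_def c2_def s2_def by (rule int_cis) simp
  show ?thesis unfolding chi phi psi ea eb ep eq cmod_power2
    by (simp add: algebra_simps)
qed

lemma cQn: "sy.cQ (-t) = sy.cQ t" unfolding sy.cQ_def by simp
lemma sQn: "sy.sQ (-t) = - sy.sQ t" unfolding sy.sQ_def by simp
lemma Cfn: "sy.Cf (-t) y = sy.Cf t y" unfolding sy.Cf_def cQn by simp
lemma Sfn: "sy.Sf (-t) y = - sy.Sf t y" unfolding sy.Sf_def sQn by simp

lemma aan: "aa s (-t) = aa s t" unfolding aa_def Cfn ..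
lemma bbn: "bb s (-t) = - bb s t" unfolding bb_def Sfn by simp
lemma ppn: "pp s (-t) = - pp s t" unfolding pp_def Sfn by simp
lemma qqn: "qq s (-t) = qq s t" unfolding qq_def Cfn ..

lemma meas_int_t:
  fixes u :: "'a \<Rightarrow> 'a \<Rightarrow> real" and v :: "'b \<Rightarrow> 'b \<Rightarrow> real"
  assumes "case_prod u \<in> borel_measurable (borel \<Otimes>\<^sub>M borel)" "case_prod v \<in> borel_measurable (borel \<Otimes>\<^sub>M borel)"
  shows "(\<lambda>t. \<integral>z. u s (fst z) * v t (snd z) \<partial>P) \<in> borel_measurable borel"
proof (rule P.borel_measurable_lebesgue_integral)
  have "(\<lambda>x. u s (fst (snd x)) * v (fst x) (snd (snd x))) \<in> borel_measurable (borel \<Otimes>\<^sub>M P)"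
  proof (rule borel_measurable_times)
    show "(\<lambda>x. u s (fst (snd x))) \<in> borel_measurable (borel \<Otimes>\<^sub>M P)"
    proof -
      have c: "(\<lambda>x. s) \<in> measurable (borel \<Otimes>\<^sub>M P) borel" by simp
      show ?thesis using measurable_compose[OF measurable_Pair[OF c measurable_compose[OF measurable_snd fstP]] assms(1)]
        by simp
    qed
    show "(\<lambda>x. v (fst x) (snd (snd x))) \<in> borel_measurable (borel \<Otimes>\<^sub>M P)"
      using measurable_compose[OF measurable_Pair[OF measurable_fst measurable_compose[OF measurable_snd sndP]] assms(2)]
      by simp
  qed
  then show "(\<lambda>(t, z). u s (fst z) * v t (snd z)) \<in> borel_measurable (borel \<Otimes>\<^sub>M P)"
    by (simp add: case_prod_beta)
qed

lemma aa_meas: "aa s \<in> borel_measurable borel" unfolding aa_def[abs_def] by (rule meas_int_t) simp_all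
lemma bb_meas: "bb s \<in> borel_measurable borel" unfolding bb_def[abs_def] by (rule meas_int_t) simp_all
lemma pp_meas: "pp s \<in> borel_measurable borel" unfolding pp_def[abs_def] by (rule meas_int_t) simp_all
lemma qq_meas: "qq s \<in> borel_measurable borel" unfolding qq_def[abs_def] by (rule meas_int_t) simp_all

lemma bnd4: "\<bar>\<integral>z. u (fst z) * v (snd z) \<partial>P\<bar> \<le> 4" if "u \<in> borel_measurable borel" "v \<in> borel_measurable borel"
  "\<And>x. \<bar>u x\<bar> \<le> 2" "\<And>y. \<bar>v y\<bar> \<le> 2" for u :: "'a \<Rightarrow> real" and v :: "'b \<Rightarrow> real"
proof -
  have m: "(\<lambda>z. u (fst z) * v (snd z)) \<in> borel_measurable P"
    using that(1,2) by (intro borel_measurable_times measurable_compose[OF fstP] measurable_compose[OF sndP])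
  have "\<bar>\<integral>z. u (fst z) * v (snd z) \<partial>P\<bar> \<le> (2*2) * measure P (space P)"
    by (rule intabs[OF P.finite_measure_axioms m]) (rule prod_bnd; rule that)
  then show ?thesis by (simp add: P.prob_space)
qed

lemma aa_bnd: "\<bar>aa s t\<bar> \<le> 4" unfolding aa_def
  by (rule bnd4) (auto intro: sx.Cf_bnd sy.Cf_bnd)
lemma bb_bnd: "\<bar>bb s t\<bar> \<le> 4" unfolding bb_def
  by (rule bnd4) (auto intro: sx.Sf_bnd sy.Sf_bnd)
lemma pp_bnd: "\<bar>pp s t\<bar> \<le> 4" unfolding pp_def
  by (rule bnd4) (auto intro: sx.Cf_bnd sy.Sf_bnd)
lemma qq_bnd: "\<bar>qq s t\<bar> \<le> 4" unfolding qq_def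
  by (rule bnd4) (auto intro: sx.Sf_bnd sy.Cf_bnd)

lemma sym_int:
  "(\<integral>t. (aa s t - bb s t)\<^sup>2 + (pp s t + qq s t)\<^sup>2 \<partial>\<nu>) = (\<integral>t. (aa s t)\<^sup>2 + (pp s t)\<^sup>2 + (qq s t)\<^sup>2 + (bb s t)\<^sup>2 \<partial>\<nu>)"
proof -
  define h where "h t = (aa s t - bb s t)\<^sup>2 + (pp s t + qq s t)\<^sup>2" for t
  have hm: "h \<in> borel_measurable borel" unfolding h_def
    by (intro borel_measurable_add borel_measurable_power borel_measurable_diff aa_meas bb_meas pp_meas qq_meas)
  have um: "(\<lambda>t. - t) \<in> borel_measurable \<nu>" by (rule borel_measurable_uminus[OF idnu])
  have hb: "\<bar>h t\<bar> \<le> 128" for t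
  proof -
    have "\<bar>aa s t - bb s t\<bar> \<le> 8" "\<bar>pp s t + qq s t\<bar> \<le> 8"
      using aa_bnd[of s t] bb_bnd[of s t] pp_bnd[of s t] qq_bnd[of s t] by linarith+
    then have "\<bar>aa s t - bb s t\<bar>\<^sup>2 \<le> 8\<^sup>2" "\<bar>pp s t + qq s t\<bar>\<^sup>2 \<le> 8\<^sup>2"
      by (intro power_mono; simp)+
    then show ?thesis unfolding h_def by simp
  qed
  have hnu: "h \<in> borel_measurable \<nu>" using measurable_compose[OF idnu hm] by simp
  have hnu2: "(\<lambda>t. h (- t)) \<in> borel_measurable \<nu>" by (rule measurable_compose[OF um hm])
  have i1: "integrable \<nu> h" by (rule intbnd[OF fnu hnu hb])
  have i2: "integrable \<nu> (\<lambda>t. h (- t))" by (rule intbnd[OF fnu hnu2 hb])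
  have e1: "(\<integral>t. h (- t) \<partial>\<nu>) = (\<integral>t. h t \<partial>\<nu>)"
  proof -
    have "(\<integral>t. h t \<partial>distr \<nu> borel uminus) = (\<integral>t. h (- t) \<partial>\<nu>)"
      by (rule integral_distr[OF um hm])
    then show ?thesis using symnu by simp
  qed
  have pt: "h t + h (- t) = 2 * ((aa s t)\<^sup>2 + (pp s t)\<^sup>2 + (qq s t)\<^sup>2 + (bb s t)\<^sup>2)" for t
    unfolding h_def aan bbn ppn qqn by (simp add: power2_eq_square algebra_simps)
  have "(\<integral>t. (aa s t)\<^sup>2 + (pp s t)\<^sup>2 + (qq s t)\<^sup>2 + (bb s t)\<^sup>2 \<partial>\<nu>) = (\<integral>t. (h t + h (- t)) / 2 \<partial>\<nu>)"
    by (intro Bochner_Integration.integral_cong refl) (simp add: pt)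
  also have "\<dots> = ((\<integral>t. h t \<partial>\<nu>) + (\<integral>t. h (- t) \<partial>\<nu>)) / 2"
    using i1 i2 by simp
  also have "\<dots> = (\<integral>t. h t \<partial>\<nu>)" unfolding e1 by simp
  finally show ?thesis unfolding h_def by simp
qed

lemma main_dc:
  "(\<integral>s. (\<integral>t. (cmod (chi s t - phi s * psi t))\<^sup>2 \<partial>\<nu>) \<partial>\<mu>)
   = (\<integral>w. sx.DPhi (fst (fst w)) (fst (snd w)) * sy.DPhi (snd (fst w)) (snd (snd w)) \<partial>(P \<Otimes>\<^sub>M P))"
proof -
  have pw: "sx.DPhi (fst (fst w)) (fst (snd w)) * sy.DPhi (snd (fst w)) (snd (snd w))
      = (\<integral>s. (\<integral>t. FF s t w \<partial>\<nu>) \<partial>\<mu>)" for w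
  proof -
    let ?x1 = "fst (fst w)" and ?x4 = "fst (snd w)" and ?y1 = "snd (fst w)" and ?y4 = "snd (snd w)"
    have "sx.DPhi ?x1 ?x4 * sy.DPhi ?y1 ?y4 = (\<integral>s. sx.kf s ?x1 ?x4 \<partial>\<mu>) * (\<integral>t. sy.kf t ?y1 ?y4 \<partial>\<nu>)"
      unfolding sx.DPhi_eq sy.DPhi_eq by simp
    also have "\<dots> = (\<integral>s. sx.kf s ?x1 ?x4 * (\<integral>t. sy.kf t ?y1 ?y4 \<partial>\<nu>) \<partial>\<mu>)"
      by (rule integral_mult_left_zero[symmetric])
    also have "\<dots> = (\<integral>s. (\<integral>t. sx.kf s ?x1 ?x4 * sy.kf t ?y1 ?y4 \<partial>\<nu>) \<partial>\<mu>)"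
      by (intro Bochner_Integration.integral_cong refl integral_mult_right_zero[symmetric])
    finally show ?thesis unfolding FF_def .
  qed
  have "(\<integral>w. sx.DPhi (fst (fst w)) (fst (snd w)) * sy.DPhi (snd (fst w)) (snd (snd w)) \<partial>(P \<Otimes>\<^sub>M P))
      = (\<integral>w. (\<integral>s. (\<integral>t. FF s t w \<partial>\<nu>) \<partial>\<mu>) \<partial>(P \<Otimes>\<^sub>M P))"
    by (simp only: pw)
  also have "\<dots> = (\<integral>s. (\<integral>t. (\<integral>w. FF s t w \<partial>(P \<Otimes>\<^sub>M P)) \<partial>\<nu>) \<partial>\<mu>)" by (rule swap)
  also have "\<dots> = (\<integral>s. (\<integral>t. (aa s t)\<^sup>2 + (pp s t)\<^sup>2 + (qq s t)\<^sup>2 + (bb s t)\<^sup>2 \<partial>\<nu>) \<partial>\<mu>)"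
    unfolding FF_def core_inner ..
  also have "\<dots> = (\<integral>s. (\<integral>t. (aa s t - bb s t)\<^sup>2 + (pp s t + qq s t)\<^sup>2 \<partial>\<nu>) \<partial>\<mu>)"
    unfolding sym_int ..
  also have "\<dots> = (\<integral>s. (\<integral>t. (cmod (chi s t - phi s * psi t))\<^sup>2 \<partial>\<nu>) \<partial>\<mu>)"
    unfolding char_eq ..
  finally show ?thesis ..
qed

end



lemma fst_bor[measurable]: "fst \<in> measurable (borel :: ('a::second_countable_topology \<times> 'b::second_countable_topology) measure) borel"
  using measurable_fst[of "borel::'a measure" "borel::'b measure"] unfolding borel_prod .
lemma snd_bor[measurable]: "snd \<in> measurable (borel :: ('a::second_countable_topology \<times> 'b::second_countable_topology) measure) borel"
  using measurable_snd[of "borel::'a measure" "borel::'b measure"] unfolding borel_prod .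

lemma joint_swap:
  fixes Z1 Z4 :: "'s \<Rightarrow> 'a::euclidean_space"
  assumes N: "prob_space N" and [measurable]: "Z1 \<in> borel_measurable N" "Z4 \<in> borel_measurable N"
    and Q: "prob_space Q"
    and j: "distr N (borel \<Otimes>\<^sub>M borel) (\<lambda>\<omega>. (Z1 \<omega>, Z4 \<omega>)) = Q \<Otimes>\<^sub>M Q"
    and sQ: "sets Q = sets borel"
  shows "distr N (borel \<Otimes>\<^sub>M borel) (\<lambda>\<omega>. (Z4 \<omega>, Z1 \<omega>)) = Q \<Otimes>\<^sub>M Q"
proof -
  interpret Q: prob_space Q by (rule Q)
  interpret QQ: pair_sigma_finite Q Q by unfold_locales
  have "distr N (borel \<Otimes>\<^sub>M borel) (\<lambda>\<omega>. (Z4 \<omega>, Z1 \<omega>))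
      = distr (distr N (borel \<Otimes>\<^sub>M borel) (\<lambda>\<omega>. (Z1 \<omega>, Z4 \<omega>))) (borel \<Otimes>\<^sub>M borel) (\<lambda>(x, y). (y, x))"
    by (subst distr_distr) (auto simp: comp_def)
  also have "\<dots> = distr (Q \<Otimes>\<^sub>M Q) (Q \<Otimes>\<^sub>M Q) (\<lambda>(x, y). (y, x))"
    unfolding j by (rule distr_cong) (auto simp: sQ cong: sets_pair_measure_cong)
  also have "\<dots> = Q \<Otimes>\<^sub>M Q" by (rule QQ.distr_pair_swap[symmetric])
  finally show ?thesis .
qed

lemma dc_ae:
  fixes Z1 Z4 :: "'s \<Rightarrow> 'a::euclidean_space" and Phi :: "'a \<Rightarrow> real"
  assumes N: "prob_space N" and [measurable]: "Z1 \<in> borel_measurable N" "Z4 \<in> borel_measurable N"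
    and ind: "prob_space.indep_var N borel Z1 borel Z4"
    and d1: "distr N borel Z1 = Q" and d4: "distr N borel Z4 = Q"
    and [measurable]: "Phi \<in> borel_measurable borel" and bnd: "\<And>x. \<bar>Phi x\<bar> \<le> B"
  shows "AE \<omega> in N. double_centered N Phi Z1 Z4 \<omega> = Phi (Z1 \<omega> - Z4 \<omega>) - (\<integral>x. Phi (Z4 \<omega> - x) \<partial>Q)
      - (\<integral>x. Phi (x - Z1 \<omega>) \<partial>Q) + (\<integral>z. (\<integral>x. Phi (z - x) \<partial>Q) \<partial>Q)"
proof -
  interpret N: prob_space N by (rule N)
  have Q: "prob_space Q" unfolding d1[symmetric] by (rule N.prob_space_distr) simp
  interpret Q: prob_space Q by (rule Q)
  interpret QQ: pair_sigma_finite Q Q by unfold_locales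
  interpret QQf: finite_measure "Q \<Otimes>\<^sub>M Q" by (intro finite_measure_pair_measure) unfold_locales
  have sQ: "sets Q = sets borel" unfolding d1[symmetric] by simp
  have B0: "0 \<le> B" using bnd[of undefined] by linarith
  have j14: "distr N (borel \<Otimes>\<^sub>M borel) (\<lambda>\<omega>. (Z1 \<omega>, Z4 \<omega>)) = Q \<Otimes>\<^sub>M Q"
    using ind unfolding N.indep_var_distribution_eq d1 d4 by simp
  have j41: "distr N (borel \<Otimes>\<^sub>M borel) (\<lambda>\<omega>. (Z4 \<omega>, Z1 \<omega>)) = Q \<Otimes>\<^sub>M Q"
    by (rule joint_swap[OF N _ _ Q j14 sQ]) simp_all
  have g1: "(\<lambda>(x, y). Phi (x - y)) \<in> borel_measurable (borel \<Otimes>\<^sub>M borel)" by measurable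
  have g2: "(\<lambda>(x, y). Phi (y - x)) \<in> borel_measurable (borel \<Otimes>\<^sub>M borel)" by measurable
  have c4: "AE \<omega> in N. real_cond_exp N (vimage_algebra (space N) Z4 borel) (\<lambda>\<omega>. Phi (Z4 \<omega> - Z1 \<omega>)) \<omega>
           = (\<integral>w. Phi (Z4 \<omega> - w) \<partial>Q)"
    using cond_exp_general[OF N _ _ Q sQ d4 j41 g1 bnd] by simp
  have c1: "AE \<omega> in N. real_cond_exp N (vimage_algebra (space N) Z1 borel) (\<lambda>\<omega>. Phi (Z4 \<omega> - Z1 \<omega>)) \<omega>
           = (\<integral>w. Phi (w - Z1 \<omega>) \<partial>Q)"
    using cond_exp_general[OF N _ _ Q sQ d1 j14 g2 bnd] by simp
  have gQ: "(\<lambda>p. Phi (fst p - snd p)) \<in> borel_measurable (Q \<Otimes>\<^sub>M Q)"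
    unfolding measurable_cong_sets[OF sets_pair_measure_cong[OF sQ sQ] refl] by measurable
  have m: "(\<integral>\<omega>. Phi (Z1 \<omega> - Z4 \<omega>) \<partial>N) = (\<integral>z. (\<integral>x. Phi (z - x) \<partial>Q) \<partial>Q)"
  proof -
    have "(\<integral>\<omega>. Phi (Z1 \<omega> - Z4 \<omega>) \<partial>N) = (\<integral>p. Phi (fst p - snd p) \<partial>(Q \<Otimes>\<^sub>M Q))"
      unfolding j14[symmetric] by (subst integral_distr) auto
    also have "\<dots> = (\<integral>z. (\<integral>x. Phi (z - x) \<partial>Q) \<partial>Q)"
      by (subst QQ.integral_fst'[symmetric]) (auto intro!: QQf.integrable_const_bound[where B=B] gQ simp: bnd)
    finally show ?thesis .
  qed
  show ?thesis using c1 c4 unfolding double_centered_def m by auto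
qed
theorem corollary3p5:
  fixes M N :: "'s measure"
    and \<mu> :: "'a::euclidean_space measure" and \<nu> :: "'b::euclidean_space measure"
    and X X1 X4 :: "'s \<Rightarrow> 'a" and Y Y1 Y4 :: "'s \<Rightarrow> 'b"
  assumes "prob_space M"
    and "X \<in> borel_measurable M" and "Y \<in> borel_measurable M"
    and "finite_measure \<mu>" and "symmetric_levy_measure \<mu>" and "full_support \<mu>"
    and "finite_measure \<nu>" and "symmetric_levy_measure \<nu>" and "full_support \<nu>"
    and "prob_space N"
    and "X1 \<in> borel_measurable N" and "Y1 \<in> borel_measurable N"
    and "X4 \<in> borel_measurable N" and "Y4 \<in> borel_measurable N"
    and "distr N borel (\<lambda>\<omega>. (X1 \<omega>, Y1 \<omega>)) = distr M borel (\<lambda>\<omega>. (X \<omega>, Y \<omega>))"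
    and "distr N borel (\<lambda>\<omega>. (X4 \<omega>, Y4 \<omega>)) = distr M borel (\<lambda>\<omega>. (X \<omega>, Y \<omega>))"
    and "prob_space.indep_var N borel (\<lambda>\<omega>. (X1 \<omega>, Y1 \<omega>)) borel (\<lambda>\<omega>. (X4 \<omega>, Y4 \<omega>))"
  shows "dcov2 \<mu> \<nu> M X Y =
    (LINT \<omega>|N. double_centered N (levy_psi \<mu>) X1 X4 \<omega> * double_centered N (levy_psi \<nu>) Y1 Y4 \<omega>)"
proof -
  note asm = assms
  interpret M: prob_space M by (rule assms(1))
  interpret N: prob_space N by (rule assms(10))
  have [measurable]: "X \<in> borel_measurable M" "Y \<in> borel_measurable M" "X1 \<in> borel_measurable N"
    "Y1 \<in> borel_measurable N" "X4 \<in> borel_measurable N" "Y4 \<in> borel_measurable N" using assms by auto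
  have mV: "(\<lambda>\<omega>. (X \<omega>, Y \<omega>)) \<in> measurable M borel"
    using measurable_Pair[OF assms(2) assms(3)] unfolding borel_prod .
  have mV1[measurable]: "(\<lambda>\<omega>. (X1 \<omega>, Y1 \<omega>)) \<in> measurable N borel"
    using measurable_Pair[OF assms(11) assms(12)] unfolding borel_prod .
  have mV4[measurable]: "(\<lambda>\<omega>. (X4 \<omega>, Y4 \<omega>)) \<in> measurable N borel"
    using measurable_Pair[OF assms(13) assms(14)] unfolding borel_prod .
  define P where "P = distr M borel (\<lambda>\<omega>. (X \<omega>, Y \<omega>))"
  have pP: "prob_space P" unfolding P_def by (rule M.prob_space_distr[OF mV])
  have sP: "sets P = sets borel" unfolding P_def by simp
  have smu: "sets \<mu> = sets borel" using assms(5) unfolding symmetric_levy_measure_def by simp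
  have snu: "sets \<nu> = sets borel" using assms(8) unfolding symmetric_levy_measure_def by simp
  have symnu: "distr \<nu> borel uminus = \<nu>"
  proof (rule measure_eqI)
    show "sets (distr \<nu> borel uminus) = sets \<nu>" using snu by simp
    fix A assume "A \<in> sets (distr \<nu> borel uminus)"
    then have A: "A \<in> sets borel" by simp
    have sp: "space \<nu> = UNIV" using sets_eq_imp_space_eq[OF snu] by simp
    have um: "(\<lambda>x. - x) \<in> borel_measurable \<nu>" by (rule borel_measurable_uminus[OF measurable_ident_sets[OF snu]])
    have "emeasure (distr \<nu> borel uminus) A = emeasure \<nu> (uminus -` A \<inter> space \<nu>)"
      using um A by (simp add: emeasure_distr)
    also have "uminus -` A \<inter> space \<nu> = uminus ` A"
      by (auto simp: sp image_iff) (metis minus_minus)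
    also have "emeasure \<nu> (uminus ` A) = emeasure \<nu> A"
      using assms(8) A snu unfolding symmetric_levy_measure_def by auto
    finally show "emeasure (distr \<nu> borel uminus) A = emeasure \<nu> A" .
  qed
  interpret D: dc \<mu> \<nu> P
    by (rule dc.intro) (auto simp: assms(4,7) smu snu pP sP symnu)
  have cism: "(\<lambda>z. cis (f z)) \<in> borel_measurable borel" if "f \<in> borel_measurable borel" for f :: "'a \<times> 'b \<Rightarrow> real"
    using that unfolding borel_measurable_complex_iff by simp
  have cism1: "(\<lambda>z. cis (f z)) \<in> borel_measurable borel" if "f \<in> borel_measurable borel" for f :: "'a \<times> 'b \<Rightarrow> real"
    using that unfolding borel_measurable_complex_iff by simp
  have lhs: "dcov2 \<mu> \<nu> M X Y = (\<integral>s. (\<integral>t. (cmod (D.chi s t - D.phi s * D.psi t))\<^sup>2 \<partial>\<nu>) \<partial>\<mu>)"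
  proof -
    have jc: "joint_charfun M X Y s t = D.chi s t" for s t
    proof -
      have "(\<lambda>z. cis (s \<bullet> fst z + t \<bullet> snd z)) \<in> borel_measurable (borel :: ('a \<times> 'b) measure)"
        by (rule cism) measurable
      then show ?thesis unfolding joint_charfun_def D.chi_def unfolding P_def
        by (subst integral_distr[OF mV]) auto
    qed
    have c1: "charfun M X s = D.phi s" for s
    proof -
      have "(\<lambda>z. cis (s \<bullet> fst z)) \<in> borel_measurable (borel :: ('a \<times> 'b) measure)"
        by (rule cism) measurable
      then show ?thesis unfolding charfun_def D.phi_def unfolding P_def
        by (subst integral_distr[OF mV]) auto
    qed
    have c2: "charfun M Y t = D.psi t" for t
    proof -
      have "(\<lambda>z. cis (t \<bullet> snd z)) \<in> borel_measurable (borel :: ('a \<times> 'b) measure)"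
        by (rule cism) measurable
      then show ?thesis unfolding charfun_def D.psi_def unfolding P_def
        by (subst integral_distr[OF mV]) auto
    qed
    show ?thesis unfolding dcov2_def jc c1 c2 ..
  qed
  have d1: "distr N borel (\<lambda>\<omega>. (X1 \<omega>, Y1 \<omega>)) = P" using assms(15) unfolding P_def .
  have d4: "distr N borel (\<lambda>\<omega>. (X4 \<omega>, Y4 \<omega>)) = P" using assms(16) unfolding P_def .
  have joint: "distr N (borel \<Otimes>\<^sub>M borel) (\<lambda>\<omega>. ((X1 \<omega>, Y1 \<omega>), (X4 \<omega>, Y4 \<omega>))) = P \<Otimes>\<^sub>M P"
    using assms(17) unfolding N.indep_var_distribution_eq d1 d4 by simp
  have dX1: "distr N borel X1 = distr P borel fst"
    unfolding d1[symmetric] by (subst distr_distr) (auto simp: comp_def)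
  have dX4: "distr N borel X4 = distr P borel fst"
    unfolding d4[symmetric] by (subst distr_distr) (auto simp: comp_def)
  have dY1: "distr N borel Y1 = distr P borel snd"
    unfolding d1[symmetric] by (subst distr_distr) (auto simp: comp_def)
  have dY4: "distr N borel Y4 = distr P borel snd"
    unfolding d4[symmetric] by (subst distr_distr) (auto simp: comp_def)
  have iX: "N.indep_var borel X1 borel X4"
    using N.indep_var_compose[OF assms(17) fst_bor fst_bor] by (simp add: comp_def)
  have iY: "N.indep_var borel Y1 borel Y4"
    using N.indep_var_compose[OF assms(17) snd_bor snd_bor] by (simp add: comp_def)
  have aeX: "AE \<omega> in N. double_centered N (levy_psi \<mu>) X1 X4 \<omega> = D.sx.DPhi (X1 \<omega>) (X4 \<omega>)"
    using dc_ae[OF assms(10) assms(11) assms(13) iX dX1 dX4 D.sx.psi_meas D.sx.psi_bnd]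
    unfolding D.sx.DPhi_def .
  have aeY: "AE \<omega> in N. double_centered N (levy_psi \<nu>) Y1 Y4 \<omega> = D.sy.DPhi (Y1 \<omega>) (Y4 \<omega>)"
    using dc_ae[OF assms(10) assms(12) assms(14) iY dY1 dY4 D.sy.psi_meas D.sy.psi_bnd]
    unfolding D.sy.DPhi_def .
  have psm1[measurable]: "levy_psi \<mu> \<in> borel_measurable borel" by (rule D.sx.psi_meas)
  have psm2[measurable]: "levy_psi \<nu> \<in> borel_measurable borel" by (rule D.sy.psi_meas)
  have "(\<integral>\<omega>. double_centered N (levy_psi \<mu>) X1 X4 \<omega> * double_centered N (levy_psi \<nu>) Y1 Y4 \<omega> \<partial>N)
      = (\<integral>\<omega>. D.sx.DPhi (X1 \<omega>) (X4 \<omega>) * D.sy.DPhi (Y1 \<omega>) (Y4 \<omega>) \<partial>N)"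
  proof (rule integral_cong_AE)
    show "(\<lambda>\<omega>. double_centered N (levy_psi \<mu>) X1 X4 \<omega> * double_centered N (levy_psi \<nu>) Y1 Y4 \<omega>) \<in> borel_measurable N"
      unfolding double_centered_def by measurable
    show "(\<lambda>\<omega>. D.sx.DPhi (X1 \<omega>) (X4 \<omega>) * D.sy.DPhi (Y1 \<omega>) (Y4 \<omega>)) \<in> borel_measurable N"
      by (intro borel_measurable_times D.sx.DPhi_meas2 D.sy.DPhi_meas2) simp_all
    show "AE \<omega> in N. double_centered N (levy_psi \<mu>) X1 X4 \<omega> * double_centered N (levy_psi \<nu>) Y1 Y4 \<omega>
        = D.sx.DPhi (X1 \<omega>) (X4 \<omega>) * D.sy.DPhi (Y1 \<omega>) (Y4 \<omega>)"
      using aeX aeY by auto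
  qed
  also have "\<dots> = (\<integral>w. D.sx.DPhi (fst (fst w)) (fst (snd w)) * D.sy.DPhi (snd (fst w)) (snd (snd w)) \<partial>(P \<Otimes>\<^sub>M P))"
  proof -
    have fm: "(\<lambda>w. D.sx.DPhi (fst (fst w)) (fst (snd w)) * D.sy.DPhi (snd (fst w)) (snd (snd w)))
        \<in> borel_measurable (borel \<Otimes>\<^sub>M borel :: (('a \<times> 'b) \<times> ('a \<times> 'b)) measure)"
      by (intro borel_measurable_times D.sx.DPhi_meas2 D.sy.DPhi_meas2
          measurable_compose[OF measurable_fst fst_bor] measurable_compose[OF measurable_snd fst_bor]
          measurable_compose[OF measurable_fst snd_bor] measurable_compose[OF measurable_snd snd_bor])
    show ?thesis unfolding joint[symmetric]
      by (subst integral_distr[OF _ fm]) simp_all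
  qed
  also have "\<dots> = dcov2 \<mu> \<nu> M X Y" unfolding lhs by (rule D.main_dc[symmetric])
  finally show ?thesis ..
qed


end
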